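(* Let $u$ be a one-sided Sturmian sequence with left special sequence $l=l_1l_2\dots$. Let $xl_1l_2\dots l_{n-1}$ and $wl_1\dots l_{m-1}$ with $1\le m<n$ and $x,w\in\{0,1\}$ be consecutive right special significant blocks of $\tilde X_u$, and let $y\in\{0,1\}$ with $y\neq l_n$. If $x\neq w$, then the HB diagram of $X_u^+$ contains the arrow $xl_1\dots l_{n-1}\to wl_1\dots l_{m-1}l_m$. If $x=w$, then it contains the arrow $xl_1\dots l_{n-1}\to\mathrm{sig}(wl_1\dots l_{m-1}y)$.
   Context: A sequence $u\in\{0,1\}^{\mathbb N}$ is Sturmian if for every $n\ge1$ exactly $n+1$ distinct blocks of length $n$ occur in $u$. $X_u^+$ is the closure of $\{\sigma^n u:n\in\mathbb N\}$, $\sigma$ the shift $(\sigma x)_i=x_{i+1}$, and $\tilde X_u=\{x\in\{0,1\}^{\mathbb Z}: x_px_{p+1}\dots\in X_u^+\ \forall p\}$; the languages of $u$, $X_u^+$, $\tilde X_u$ coincide. For each $n$ there is a unique block $L_n$ of length $n$ with $0L_n$ and $1L_n$ in the language; these are the prefixes $L_n=l_1\dots l_n$ of the left special sequence $l$. A block $v$ is right special if both $v0$ and $v1$ are in the language; the right special block of length $n$ is $l_nl_{n-1}\dots l_1$. For a block $a_{-n}\dots a_0$ in the language, $\mathrm{fol}(a_{-n}\dots a_0)=\{b_0b_1\dots\in X_u^+:\exists b\in\tilde X_u,\ b_{-n}\dots b_0=a_{-n}\dots a_0\}$. A block $a_{-n}\dots a_0$ ($n\ge1$) is significant if $\mathrm{fol}(a_{-n}\dots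 a_0)\subsetneq\mathrm{fol}(a_{-n+1}\dots a_0)$; $0$ and $1$ are also significant. $\mathrm{sig}(\cdot)$ is the longest significant suffix. The HB diagram has vertex set the significant blocks and an arrow $\alpha\to\beta$ iff there is a symbol $b$ with $\alpha b$ in the language and $\beta=\mathrm{sig}(\alpha b)$. For $m=1$ the block $wl_1\dots l_{m-1}$ is the single symbol $w$. The two blocks being consecutive means both are right special significant blocks and there is no right special significant block of length strictly between $m$ and $n$. *)

theory Defs
  imports "HOL-Analysis.Analysis" "HOL-Library.Sublist"
begin

text \<open>Symbols: the alphabet {0,1} is represented by bool, with 0 = False and 1 = True.
  One-sided sequences are functions nat => bool (with the product topology of the
  discrete space bool), two-sided sequences are functions int => bool,
  blocks are bool lists.\<close>

definition factor :: "(nat \<Rightarrow> bool) \<Rightarrow> nat \<Rightarrow> nat \<Rightarrow> bool list" where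
  "factor u k n = map (\<lambda>i. u (k + i)) [0..<n]"

definition lang :: "(nat \<Rightarrow> bool) \<Rightarrow> bool list set" where
  "lang u = {factor u k n | k n. True}"

definition sturmian :: "(nat \<Rightarrow> bool) \<Rightarrow> bool" where
  "sturmian u \<longleftrightarrow> (\<forall>n\<ge>1. card {v \<in> lang u. length v = n} = n + 1)"

definition shift :: "(nat \<Rightarrow> bool) \<Rightarrow> (nat \<Rightarrow> bool)" where
  "shift x = (\<lambda>i. x (Suc i))"

definition Xplus :: "(nat \<Rightarrow> bool) \<Rightarrow> (nat \<Rightarrow> bool) set" where
  "Xplus u = closure {(shift ^^ n) u | n. True}"

definition Xtilde :: "(nat \<Rightarrow> bool) \<Rightarrow> (int \<Rightarrow> bool) set" where
  "Xtilde u = {x. \<forall>p::int. (\<lambda>i::nat. x (p + int i)) \<in> Xplus u}"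

text \<open>fol of a nonempty block a = a_{-n} ... a_0 (list of length n+1,
  with a ! j = a_{j-n}).\<close>
definition fol :: "(nat \<Rightarrow> bool) \<Rightarrow> bool list \<Rightarrow> (nat \<Rightarrow> bool) set" where
  "fol u a = {c \<in> Xplus u. \<exists>b \<in> Xtilde u.
      (\<forall>j < length a. b (int j - int (length a - 1)) = a ! j) \<and>
      (\<forall>i::nat. c i = b (int i))}"

definition significant :: "(nat \<Rightarrow> bool) \<Rightarrow> bool list \<Rightarrow> bool" where
  "significant u a \<longleftrightarrow> a \<in> lang u \<and>
     (length a = 1 \<or> (length a \<ge> 2 \<and> fol u a \<subset> fol u (tl a)))"

definition sig :: "(nat \<Rightarrow> bool) \<Rightarrow> bool list \<Rightarrow> bool list" where
  "sig u a = (THE s. suffix s a \<and> significant u s \<and>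
      (\<forall>t. suffix t a \<and> significant u t \<longrightarrow> length t \<le> length s))"

definition hb_arrow :: "(nat \<Rightarrow> bool) \<Rightarrow> bool list \<Rightarrow> bool list \<Rightarrow> bool" where
  "hb_arrow u \<alpha> \<beta> \<longleftrightarrow> significant u \<alpha> \<and> significant u \<beta> \<and>
     (\<exists>b. \<alpha> @ [b] \<in> lang u \<and> \<beta> = sig u (\<alpha> @ [b]))"

definition right_special :: "(nat \<Rightarrow> bool) \<Rightarrow> bool list \<Rightarrow> bool" where
  "right_special u v \<longleftrightarrow> v @ [False] \<in> lang u \<and> v @ [True] \<in> lang u"

text \<open>L_n = l_1 ... l_n, where l is indexed from 1.\<close>
definition Lblock :: "(nat \<Rightarrow> bool) \<Rightarrow> nat \<Rightarrow> bool list" where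
  "Lblock l n = map l [1..<Suc n]"

definition left_special_seq :: "(nat \<Rightarrow> bool) \<Rightarrow> (nat \<Rightarrow> bool) \<Rightarrow> bool" where
  "left_special_seq u l \<longleftrightarrow>
     (\<forall>n. False # Lblock l n \<in> lang u \<and> True # Lblock l n \<in> lang u)"

definition consecutive_rs :: "(nat \<Rightarrow> bool) \<Rightarrow> bool list \<Rightarrow> bool list \<Rightarrow> bool" where
  "consecutive_rs u \<alpha> \<beta> \<longleftrightarrow>
     right_special u \<alpha> \<and> significant u \<alpha> \<and> right_special u \<beta> \<and> significant u \<beta> \<and>
     \<not> (\<exists>v. right_special u v \<and> significant u v \<and>
            min (length \<alpha>) (length \<beta>) < length v \<and> length v < max (length \<alpha>) (length \<beta>))"

end

theory Submission
  imports Defs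
begin


lemma factor_length[simp]: "length (factor u k n) = n"
  by (simp add: factor_def)

lemma factor_nth[simp]: "i < n \<Longrightarrow> factor u k n ! i = u (k + i)"
  by (simp add: factor_def)

lemma factor_add: "factor u k (a + b) = factor u k a @ factor u (k + a) b"
  by (rule nth_equalityI) (auto simp: nth_append add.assoc)

lemma factor_Suc: "factor u k (Suc n) = factor u k n @ [u (k + n)]"
  by (simp add: factor_def)

lemma factor_Suc': "factor u k (Suc n) = u k # factor u (Suc k) n"
  by (simp add: list_eq_iff_nth_eq nth_Cons split: nat.split)

lemma in_lang: "v \<in> lang u \<longleftrightarrow> (\<exists>k. factor u k (length v) = v)"
  unfolding lang_def by (auto, metis factor_length)

lemma factor_in_lang[simp]: "factor u k n \<in> lang u"
  unfolding lang_def by auto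

lemma lang_sub: assumes "p @ v @ s \<in> lang u" shows "v \<in> lang u"
proof -
  from assms obtain k where k: "factor u k (length (p @ v @ s)) = p @ v @ s" by (auto simp: in_lang)
  have "factor u (k + length p) (length v) = v"
  proof (rule nth_equalityI)
    fix i assume i: "i < length (factor u (k + length p) (length v))"
    then have "i < length v" by simp
    have "(p @ v @ s) ! (length p + i) = u (k + (length p + i))"
      using k[symmetric] \<open>i < length v\<close> by (metis factor_nth length_append add_less_cancel_left trans_less_add1)
    then show "factor u (k + length p) (length v) ! i = v ! i"
      using \<open>i < length v\<close> by (simp add: nth_append add.assoc)
  qed simp
  then show ?thesis by (auto simp: in_lang)
qed

lemma lang_prefix: "v @ s \<in> lang u \<Longrightarrow> v \<in> lang u"
  using lang_sub[of "[]" v s] by simp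

lemma lang_suffix: "p @ v \<in> lang u \<Longrightarrow> v \<in> lang u"
  using lang_sub[of p v "[]"] by simp

lemma lang_Cons: "a # v \<in> lang u \<Longrightarrow> v \<in> lang u"
  using lang_suffix[of "[a]" v] by simp

lemma lang_right_ext: "v \<in> lang u \<Longrightarrow> \<exists>c. v @ [c] \<in> lang u"
proof -
  assume "v \<in> lang u"
  then obtain k where "factor u k (length v) = v" by (auto simp: in_lang)
  then have "v @ [u (k + length v)] = factor u k (Suc (length v))" by (simp add: factor_Suc)
  then show ?thesis by (metis factor_in_lang)
qed

definition langn :: "(nat \<Rightarrow> bool) \<Rightarrow> nat \<Rightarrow> bool list set" where
  "langn u n = {v \<in> lang u. length v = n}"

lemma finite_langn[simp]: "finite (langn u n)"
proof -
  have "langn u n \<subseteq> {xs. set xs \<subseteq> UNIV \<and> length xs = n}" by (auto simp: langn_def)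
  then show ?thesis using finite_lists_length_eq[of "UNIV :: bool set" n] finite_subset by auto
qed

lemma langn_0: "langn u 0 = {[]}"
  by (auto simp: langn_def in_lang factor_def)

lemma card_extra:
  assumes "finite B" "g ` A \<subseteq> B" "inj_on g A" "a \<in> B" "a \<notin> g ` A"
  shows "card A + 1 \<le> card B"
proof -
  have "finite (g ` A)" using assms(1,2) finite_subset by blast
  have "insert a (g ` A) \<subseteq> B" using assms by auto
  then have "card (insert a (g ` A)) \<le> card B" using assms(1) card_mono by blast
  moreover have "card (insert a (g ` A)) = card A + 1"
    using \<open>finite (g ` A)\<close> assms(3,5) card_image by fastforce
  ultimately show ?thesis by simp
qed

lemma card_extra2:
  assumes "finite B" "g ` A \<subseteq> B" "inj_on g A" "a \<in> B" "a \<notin> g ` A" "b \<in> B" "b \<notin> g ` A" "a \<noteq> b"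
  shows "card A + 2 \<le> card B"
proof -
  have "finite (g ` A)" using assms(1,2) finite_subset by blast
  have "insert a (insert b (g ` A)) \<subseteq> B" using assms by auto
  then have "card (insert a (insert b (g ` A))) \<le> card B" using assms(1) card_mono by blast
  moreover have "card (insert a (insert b (g ` A))) = card A + 2"
    using \<open>finite (g ` A)\<close> assms(3,5,7,8) card_image by fastforce
  ultimately show ?thesis by simp
qed

definition rext :: "(nat \<Rightarrow> bool) \<Rightarrow> bool list \<Rightarrow> bool list" where
  "rext u v = v @ [SOME c. v @ [c] \<in> lang u]"

lemma rext_in: "v \<in> lang u \<Longrightarrow> rext u v \<in> lang u"
  unfolding rext_def by (rule someI_ex) (rule lang_right_ext)

lemma rext_img: "rext u ` langn u n \<subseteq> langn u (Suc n)"
  using rext_in by (auto simp: langn_def rext_def)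

lemma rext_inj: "inj_on (rext u) A"
  by (rule inj_onI) (simp add: rext_def)

lemma rs_card: assumes "right_special u v"
  shows "card (langn u (length v)) + 1 \<le> card (langn u (Suc (length v)))"
proof -
  let ?c = "SOME c. v @ [c] \<in> lang u"
  have v: "v \<in> lang u" using assms lang_prefix unfolding right_special_def by blast
  show ?thesis
  proof (rule card_extra[OF _ rext_img rext_inj, where a = "v @ [\<not> ?c]"])
    show "v @ [\<not> ?c] \<in> langn u (Suc (length v))" using assms
      by (cases "?c") (auto simp: langn_def right_special_def)
    show "v @ [\<not> ?c] \<notin> rext u ` langn u (length v)"
      by (auto simp: rext_def)
  qed simp
qed

lemma sturmian_card: "sturmian u \<Longrightarrow> 1 \<le> n \<Longrightarrow> card (langn u n) = n + 1"
  unfolding sturmian_def langn_def by auto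

lemma rs_unique:
  assumes "sturmian u" "right_special u v1" "right_special u v2" "length v1 = length v2"
  shows "v1 = v2"
proof (rule ccontr)
  assume ne: "v1 \<noteq> v2"
  let ?n = "length v1"
  have "?n \<noteq> 0" using ne assms(4) by auto
  let ?c1 = "SOME c. v1 @ [c] \<in> lang u"
  let ?c2 = "SOME c. v2 @ [c] \<in> lang u"
  have "card (langn u ?n) + 2 \<le> card (langn u (Suc ?n))"
  proof (rule card_extra2[OF _ rext_img rext_inj, where a = "v1 @ [\<not> ?c1]" and b = "v2 @ [\<not> ?c2]"])
    show "v1 @ [\<not> ?c1] \<in> langn u (Suc ?n)" using assms
      by (cases "?c1") (auto simp: langn_def right_special_def)
    show "v2 @ [\<not> ?c2] \<in> langn u (Suc ?n)" using assms
      by (cases "?c2") (auto simp: langn_def right_special_def)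
    show "v1 @ [\<not> ?c1] \<notin> rext u ` langn u ?n" by (auto simp: rext_def langn_def)
    show "v2 @ [\<not> ?c2] \<notin> rext u ` langn u ?n" using assms(4) by (auto simp: rext_def langn_def)
    show "v1 @ [\<not> ?c1] \<noteq> v2 @ [\<not> ?c2]" using ne by auto
  qed simp
  then show False using sturmian_card[OF assms(1)] \<open>?n \<noteq> 0\<close> by simp
qed



lemma langn_card_mono: "card (langn z k) \<le> card (langn z (Suc k))"
  using card_inj_on_le[OF rext_inj rext_img] by simp

lemma mh_step:
  assumes "card (langn z M) \<le> M"
  shows "\<exists>k<M. card (langn z (Suc k)) \<le> card (langn z k)"
proof (rule ccontr)
  assume "\<not> ?thesis"
  then have lt: "\<And>k. k < M \<Longrightarrow> card (langn z k) < card (langn z (Suc k))" by force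
  have "k \<le> M \<Longrightarrow> k + 1 \<le> card (langn z k)" for k
  proof (induction k)
    case 0 then show ?case by (simp add: langn_0)
  next
    case (Suc k) then show ?case using lt[of k] by simp
  qed
  then show False using assms by force
qed

lemma no_rs_of_card:
  assumes "card (langn z (Suc k)) \<le> card (langn z k)" "length v = k"
  shows "\<not> right_special z v"
  using rs_card[of z v] assms by auto

lemma window_ext: "factor z t k @ [z (t + k)] \<in> lang z"
  by (metis factor_Suc factor_in_lang)

lemma det_periodic:
  assumes nrs: "\<And>v. length v = k \<Longrightarrow> \<not> right_special z v"
  shows "\<exists>a p. p > 0 \<and> (\<forall>t\<ge>a. z (t + p) = z t)"
proof -
  let ?W = "\<lambda>t. factor z t k"
  have "?W ` UNIV \<subseteq> langn z k" by (auto simp: langn_def)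
  then have "finite (?W ` UNIV)" by (rule finite_subset) simp
  then have "\<not> inj ?W" using finite_imageD[of ?W UNIV] infinite_UNIV_nat by auto
  then obtain a b where ab: "a \<noteq> b" "?W a = ?W b" unfolding inj_def by blast
  then obtain a b where ab: "a < b" "?W a = ?W b"
  proof (cases "a < b")
    case True then show ?thesis using ab that by blast
  next
    case False then have "b < a" using ab(1) by simp
    then show ?thesis using ab(2) that by metis
  qed
  have eq: "z (a + i) = z (b + i)" for i
  proof (induction i rule: less_induct)
    case (less i)
    show ?case
    proof (cases "i < k")
      case True
      have "?W a ! i = ?W b ! i" using ab(2) by simp
      then show ?thesis using True by simp
    next
      case False
      then obtain i' where i': "i = i' + k" by (metis add.commute le_add_diff_inverse not_less)
      have W: "?W (a + i') = ?W (b + i')"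
      proof (rule nth_equalityI)
        fix j assume "j < length (?W (a + i'))"
        then have "j < k" by simp
        then have "i' + j < i" using i' by simp
        then have "z (a + (i' + j)) = z (b + (i' + j))" by (rule less)
        then show "?W (a + i') ! j = ?W (b + i') ! j" using \<open>j < k\<close> by (simp add: add.assoc)
      qed simp
      have e1: "?W (a + i') @ [z (a + i' + k)] \<in> lang z" by (rule window_ext)
      have e2: "?W (a + i') @ [z (b + i' + k)] \<in> lang z" using window_ext[of z "b + i'" k] W by simp
      show ?thesis
      proof (rule ccontr)
        assume "z (a + i) \<noteq> z (b + i)"
        then have "right_special z (?W (a + i'))" using e1 e2 i' unfolding right_special_def
          by (cases "z (a + i)") (auto simp: add.assoc)
        then show False using nrs by simp
      qed
    qed
  qed
  show ?thesis
  proof (intro exI conjI allI impI)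
    show "b - a > 0" using ab by simp
    fix t assume "a \<le> t"
    have h: "z (a + (t - a)) = z (b + (t - a))" by (rule eq)
    have e1: "a + (t - a) = t" using \<open>a \<le> t\<close> by simp
    have e2: "b + (t - a) = t + (b - a)" using \<open>a \<le> t\<close> ab(1) by simp
    show "z (t + (b - a)) = z t" using h unfolding e1 e2 by (rule sym)
  qed
qed

lemma periodic_bounded:
  assumes "p > 0" "\<forall>t\<ge>a. z (t + p) = z t"
  shows "card (langn z K) \<le> a + p"
proof -
  have "factor z t K \<in> (\<lambda>t. factor z t K) ` {..<a+p}" for t
  proof (induction t rule: less_induct)
    case (less t)
    show ?case
    proof (cases "t < a + p")
      case True then show ?thesis by auto
    next
      case False
      have "factor z (t - p) K = factor z t K"
      proof (rule nth_equalityI)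
        fix i assume "i < length (factor z (t - p) K)"
        then have "i < K" by simp
        have "t - p + i \<ge> a" using False by simp
        then have "z (t - p + i + p) = z (t - p + i)" using assms(2) by blast
        moreover have "t - p + i + p = t + i" using False by simp
        ultimately have "z (t - p + i) = z (t + i)" by simp
        then show "factor z (t - p) K ! i = factor z t K ! i" using \<open>i < K\<close>
          by (simp only: factor_nth)
      qed simp
      moreover have "t - p < t" using assms(1) False by simp
      ultimately show ?thesis using less by metis
    qed
  qed
  then have "langn z K \<subseteq> (\<lambda>t. factor z t K) ` {..<a+p}"
  proof -
    assume h: "\<And>t. factor z t K \<in> (\<lambda>t. factor z t K) ` {..<a+p}"
    show ?thesis
    proof
      fix v assume "v \<in> langn z K"
      then have "\<exists>k. factor z k K = v" by (auto simp: langn_def in_lang)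
      then show "v \<in> (\<lambda>t. factor z t K) ` {..<a+p}" using h by metis
    qed
  qed
  then show ?thesis using card_image_le[of "{..<a+p}" "\<lambda>t. factor z t K"]
    by (metis card_lessThan card_mono dual_order.trans finite_imageI finite_lessThan)
qed

lemma mh_bounded:
  assumes "card (langn z M) \<le> M"
  shows "\<exists>Bd. \<forall>K. card (langn z K) \<le> Bd"
proof -
  obtain k where "k < M" "card (langn z (Suc k)) \<le> card (langn z k)" using mh_step[OF assms] by blast
  then have "\<And>v. length v = k \<Longrightarrow> \<not> right_special z v" using no_rs_of_card by blast
  then obtain a p where "p > 0" "\<forall>t\<ge>a. z (t + p) = z t" using det_periodic by blast
  then show ?thesis using periodic_bounded by blast
qed

lemma prefix_reoccurs:
  assumes st: "sturmian u"
  shows "\<exists>k>0. factor u k N = factor u 0 N"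
proof (rule ccontr)
  assume nr: "\<not> ?thesis"
  define z where "z = (\<lambda>i. u (Suc i))"
  have fz: "factor z k M = factor u (Suc k) M" for k M
    by (simp add: z_def factor_def)
  define M where "M = max N 1"
  have sub: "langn z M \<subseteq> langn u M - {factor u 0 M}"
  proof
    fix v assume "v \<in> langn z M"
    then have "length v = M" "\<exists>k. factor z k M = v" by (auto simp: langn_def in_lang)
    then obtain k where v: "v = factor u (Suc k) M" "length v = M"
      using fz by metis
    have "v \<noteq> factor u 0 M"
    proof
      assume "v = factor u 0 M"
      then have "take N (factor u (Suc k) M) = take N (factor u 0 M)" using v by simp
      moreover have "take N (factor u j M) = factor u j N" for j
        using factor_add[of u j N "M - N"] by (simp add: M_def)
      ultimately show False using nr by auto
    qed
    then show "v \<in> langn u M - {factor u 0 M}" using v by (auto simp: langn_def)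
  qed
  have "card (langn z M) \<le> card (langn u M - {factor u 0 M})"
    using sub by (simp add: card_mono)
  also have "\<dots> = M" using sturmian_card[OF st, of M] by (simp add: M_def langn_def)
  finally obtain Bd where Bd: "\<And>K. card (langn z K) \<le> Bd" using mh_bounded by blast
  have sub2: "langn u K \<subseteq> insert (factor u 0 K) (langn z K)" for K
  proof
    fix v assume "v \<in> langn u K"
    then have "\<exists>k. factor u k K = v" by (auto simp: langn_def in_lang)
    then obtain k where "v = factor u k K" by metis
    then show "v \<in> insert (factor u 0 K) (langn z K)"
      by (cases k) (auto simp: langn_def fz[symmetric])
  qed
  have "card (langn u K) \<le> Bd + 1" for K
  proof -
    have "card (langn u K) \<le> card (insert (factor u 0 K) (langn z K))"
      by (rule card_mono) (auto simp: sub2)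
    also have "\<dots> \<le> Suc (card (langn z K))" by (simp add: card_insert_if)
    also have "\<dots> \<le> Bd + 1" using Bd[of K] by simp
    finally show ?thesis .
  qed
  from this[of "Bd + 1"] show False using sturmian_card[OF st, of "Bd + 1"] by simp
qed

lemma lang_left_ext:
  assumes "sturmian u" "v \<in> lang u"
  shows "\<exists>e. e # v \<in> lang u"
proof -
  obtain k where k: "factor u k (length v) = v" using assms(2) by (auto simp: in_lang)
  obtain k' where k': "k' > 0" "factor u k' (length v) = v"
  proof (cases k)
    case 0
    then show ?thesis using prefix_reoccurs[OF assms(1), of "length v"] k that by auto
  next
    case (Suc j)
    then show ?thesis using k that by auto
  qed
  then have "factor u (k' - 1) (Suc (length v)) = u (k' - 1) # v"
    by (simp add: factor_Suc')
  then show ?thesis by (metis factor_in_lang)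
qed

lemma occurs_late:
  assumes "sturmian u" "v \<in> lang u"
  shows "\<exists>k\<ge>K. factor u k (length v) = v"
proof (induction K)
  case 0 then show ?case using assms(2) by (auto simp: in_lang)
next
  case (Suc K)
  then obtain k where k: "k \<ge> K" "factor u k (length v) = v" by blast
  obtain k' where k': "k' > 0" "factor u k' (k + length v) = factor u 0 (k + length v)"
    using prefix_reoccurs[OF assms(1)] by blast
  have "factor u (k' + k) (length v) = factor u k (length v)"
  proof (rule nth_equalityI)
    fix i assume "i < length (factor u (k' + k) (length v))"
    then have "i < length v" by simp
    have "factor u k' (k + length v) ! (k + i) = factor u 0 (k + length v) ! (k + i)" using k' by simp
    then show "factor u (k' + k) (length v) ! i = factor u k (length v) ! i"
      using \<open>i < length v\<close> by (simp add: add.assoc)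
  qed simp
  then show ?case using k k' by (intro exI[of _ "k' + k"]) auto
qed

definition left_special :: "(nat \<Rightarrow> bool) \<Rightarrow> bool list \<Rightarrow> bool" where
  "left_special u v \<longleftrightarrow> False # v \<in> lang u \<and> True # v \<in> lang u"

definition lext :: "(nat \<Rightarrow> bool) \<Rightarrow> bool list \<Rightarrow> bool list" where
  "lext u v = (SOME e. e # v \<in> lang u) # v"

lemma ls_unique:
  assumes st: "sturmian u" and "left_special u v1" "left_special u v2" "length v1 = length v2"
  shows "v1 = v2"
proof (rule ccontr)
  assume ne: "v1 \<noteq> v2"
  let ?n = "length v1"
  have "?n \<noteq> 0" using ne assms(4) by auto
  let ?c1 = "SOME c. c # v1 \<in> lang u"
  let ?c2 = "SOME c. c # v2 \<in> lang u"
  have img: "lext u ` langn u ?n \<subseteq> langn u (Suc ?n)"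
  proof
    fix x assume "x \<in> lext u ` langn u ?n"
    then obtain v where v: "v \<in> langn u ?n" "x = lext u v" by blast
    then have "\<exists>e. e # v \<in> lang u" using lang_left_ext[OF st] by (auto simp: langn_def)
    then have "x \<in> lang u" unfolding v(2) lext_def by (rule someI_ex)
    then show "x \<in> langn u (Suc ?n)" using v by (auto simp: langn_def lext_def)
  qed
  have inj: "inj_on (lext u) A" for A by (rule inj_onI) (simp add: lext_def)
  have "card (langn u ?n) + 2 \<le> card (langn u (Suc ?n))"
  proof (rule card_extra2[OF _ img inj, where a = "(\<not> ?c1) # v1" and b = "(\<not> ?c2) # v2"])
    show "(\<not> ?c1) # v1 \<in> langn u (Suc ?n)" using assms
      by (cases "?c1") (auto simp: langn_def left_special_def)
    show "(\<not> ?c2) # v2 \<in> langn u (Suc ?n)" using assms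
      by (cases "?c2") (auto simp: langn_def left_special_def)
    show "(\<not> ?c1) # v1 \<notin> lext u ` langn u ?n" by (auto simp: lext_def langn_def)
    show "(\<not> ?c2) # v2 \<notin> lext u ` langn u ?n" using assms(4) by (auto simp: lext_def langn_def)
    show "(\<not> ?c1) # v1 \<noteq> (\<not> ?c2) # v2" using ne by auto
  qed simp
  then show False using sturmian_card[OF assms(1)] \<open>?n \<noteq> 0\<close> by simp
qed



lemma shift_pow: "(shift ^^ n) u i = u (n + i)"
  by (induction n arbitrary: i) (auto simp: shift_def)

lemma lang_Nil[simp]: "[] \<in> lang u"
  using factor_in_lang[of u 0 0] by (simp add: factor_def)

lemma Xplus_char: "c \<in> Xplus u \<longleftrightarrow> (\<forall>N. factor c 0 N \<in> lang u)"
proof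
  assume c: "c \<in> Xplus u"
  show "\<forall>N. factor c 0 N \<in> lang u"
  proof
    fix N
    let ?S = "{f. \<forall>i\<in>{..<N}. f ((\<lambda>i. i) i) \<in> {c i}}"
    have "open ?S" by (rule product_topology_basis') (auto intro: open_discrete)
    moreover have "c \<in> ?S" by simp
    ultimately have "{(shift ^^ n) u | n. True} \<inter> ?S \<noteq> {}"
      using c unfolding Xplus_def closure_iff_nhds_not_empty by blast
    then obtain n where "\<forall>i<N. (shift ^^ n) u i = c i" by auto
    then have "factor u n N = factor c 0 N" by (intro nth_equalityI) (auto simp: shift_pow)
    then show "factor c 0 N \<in> lang u" by (metis factor_in_lang)
  qed
next
  assume h: "\<forall>N. factor c 0 N \<in> lang u"
  show "c \<in> Xplus u"
    unfolding Xplus_def closure_iff_nhds_not_empty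
  proof (intro allI impI)
    fix A S assume SA: "S \<subseteq> A" and "open S" and "c \<in> S"
    then obtain U where U: "finite {i \<in> UNIV. U i \<noteq> topspace euclidean}"
      "c \<in> Pi\<^sub>E UNIV U" "Pi\<^sub>E UNIV U \<subseteq> S"
      unfolding open_fun_def openin_product_topology_alt by blast
    have fin: "finite {i. U i \<noteq> UNIV}" using U(1) by simp
    then obtain N where N: "{i. U i \<noteq> UNIV} \<subseteq> {..<N}" using finite_nat_bounded by blast
    obtain k where k: "factor u k N = factor c 0 N" using h[rule_format, of N] by (auto simp: in_lang)
    have "(shift ^^ k) u \<in> Pi\<^sub>E UNIV U"
    proof -
      have "(shift ^^ k) u i \<in> U i" for i
      proof (cases "i < N")
        case True
        then have "u (k + i) = c i" using k by (metis add_0 factor_nth)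
        then show ?thesis using U(2) by (auto simp: shift_pow)
      next
        case False
        then have "U i = UNIV" using N by auto
        then show ?thesis by simp
      qed
      then show ?thesis by auto
    qed
    then show "{(shift ^^ n) u | n. True} \<inter> A \<noteq> {}" using U(3) SA by blast
  qed
qed

lemma Xplus_factor: "c \<in> Xplus u \<Longrightarrow> factor c t N \<in> lang u"
  using Xplus_char[of c u] factor_add[of c 0 t N] lang_suffix by (metis add_0)

lemma Xplus_shift: "c \<in> Xplus u \<Longrightarrow> (\<lambda>i. c (t + i)) \<in> Xplus u"
proof -
  assume "c \<in> Xplus u"
  moreover have "factor (\<lambda>i. c (t + i)) 0 N = factor c t N" for N by (simp add: factor_def)
  ultimately show ?thesis using Xplus_factor by (simp add: Xplus_char)
qed

lemma orbit_Xplus: "(\<lambda>i. u (k + i)) \<in> Xplus u"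
proof -
  have "factor (\<lambda>i. u (k + i)) 0 N = factor u k N" for N by (simp add: factor_def)
  then show ?thesis by (simp add: Xplus_char)
qed

lemma Xtilde_tail: "B \<in> Xtilde u \<Longrightarrow> (\<lambda>i. B (p + int i)) \<in> Xplus u"
  unfolding Xtilde_def by blast

lemma Xtilde_win: "B \<in> Xtilde u \<Longrightarrow> map (\<lambda>i. B (p + int i)) [0..<N] \<in> lang u"
  using Xtilde_tail[of B u p] Xplus_char[of "\<lambda>i. B (p + int i)" u] by (simp add: factor_def)

lemma Xtilde_shift: assumes "B \<in> Xtilde u" shows "(\<lambda>q. B (q + d)) \<in> Xtilde u"
  unfolding Xtilde_def
proof (intro CollectI allI)
  fix p
  have "(\<lambda>i. B (p + d + int i)) \<in> Xplus u" using assms unfolding Xtilde_def by blast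
  moreover have "(\<lambda>i. B (p + d + int i)) = (\<lambda>i. B (p + int i + d))" by (simp add: algebra_simps)
  ultimately show "(\<lambda>i. B (p + int i + d)) \<in> Xplus u" by simp
qed

lemma Xplus_left_ext:
  assumes st: "sturmian u" and c: "c \<in> Xplus u"
  shows "\<exists>e. (\<lambda>i. case i of 0 \<Rightarrow> e | Suc j \<Rightarrow> c j) \<in> Xplus u"
proof -
  have pre: "factor c 0 N \<in> lang u" for N using c Xplus_char by blast
  have "\<exists>e. \<forall>N. e # factor c 0 N \<in> lang u"
  proof (rule ccontr)
    assume "\<not> ?thesis"
    then obtain N1 N2 where N1: "True # factor c 0 N1 \<notin> lang u" and N2: "False # factor c 0 N2 \<notin> lang u"
      by blast
    define N where "N = max N1 N2"
    obtain e where e: "e # factor c 0 N \<in> lang u" using lang_left_ext[OF st pre] by blast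
    have "e # factor c 0 Ni \<in> lang u" if "Ni \<le> N" for Ni
    proof -
      have "factor c 0 N = factor c 0 Ni @ factor c Ni (N - Ni)"
        using factor_add[of c 0 Ni "N - Ni"] that by simp
      then show ?thesis using e lang_prefix[of "e # factor c 0 Ni"] by simp
    qed
    then show False using N1 N2 by (cases e) (auto simp: N_def)
  qed
  then obtain e where e: "\<And>N. e # factor c 0 N \<in> lang u" by blast
  let ?d = "\<lambda>i. case i of 0 \<Rightarrow> e | Suc j \<Rightarrow> c j"
  have "factor ?d 0 N \<in> lang u" for N
  proof (cases N)
    case 0 then show ?thesis by (simp add: factor_def)
  next
    case (Suc M)
    have "factor ?d 0 (Suc M) = ?d 0 # factor ?d (Suc 0) M" by (rule factor_Suc')
    moreover have "factor ?d (Suc 0) M = factor c 0 M" by (simp add: factor_def)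
    ultimately have "factor ?d 0 (Suc M) = e # factor c 0 M" by simp
    then show ?thesis using e Suc by simp
  qed
  then show ?thesis using Xplus_char by blast
qed

lemma Xtilde_ext:
  assumes st: "sturmian u" and c: "c \<in> Xplus u"
  shows "\<exists>B\<in>Xtilde u. \<forall>i. B (int i) = c i"
proof -
  define z where "z = rec_nat c (\<lambda>k zk. SOME d. d \<in> Xplus u \<and> (\<forall>i. d (Suc i) = zk i))"
  have z0: "z 0 = c" by (simp add: z_def)
  have zS: "z (Suc k) = (SOME d. d \<in> Xplus u \<and> (\<forall>i. d (Suc i) = z k i))" for k
    by (simp add: z_def)
  have zprop: "z k \<in> Xplus u \<and> (\<forall>i. z (Suc k) (Suc i) = z k i) \<and> z (Suc k) \<in> Xplus u" for k
  proof (induction k)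
    case 0
    obtain e where "(\<lambda>i. case i of 0 \<Rightarrow> e | Suc j \<Rightarrow> z 0 j) \<in> Xplus u"
      using Xplus_left_ext[OF st] c z0 by auto
    then have "\<exists>d. d \<in> Xplus u \<and> (\<forall>i. d (Suc i) = z 0 i)" by (intro exI) auto
    from someI_ex[OF this] show ?case using zS[of 0] z0 c by auto
  next
    case (Suc k)
    obtain e where "(\<lambda>i. case i of 0 \<Rightarrow> e | Suc j \<Rightarrow> z (Suc k) j) \<in> Xplus u"
      using Xplus_left_ext[OF st] Suc by blast
    then have "\<exists>d. d \<in> Xplus u \<and> (\<forall>i. d (Suc i) = z (Suc k) i)" by (intro exI) auto
    from someI_ex[OF this] show ?case using zS[of "Suc k"] Suc by auto
  qed
  have zsh: "z (K + j) (i + j) = z K i" for K i j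
    by (induction j) (use zprop in auto)
  define B where "B = (\<lambda>q::int. if q \<ge> 0 then c (nat q) else z (nat (- q)) 0)"
  have Bz: "B q = z K (nat (q + int K))" if "q + int K \<ge> 0" for q K
  proof (cases "q \<ge> 0")
    case True
    have "z (0 + K) (nat q + K) = z 0 (nat q)" by (rule zsh)
    moreover have "nat (q + int K) = nat q + K" using True by simp
    ultimately show ?thesis using True z0 by (simp add: B_def)
  next
    case False
    define K0 where "K0 = nat (- q)"
    have e1: "K0 + (K - K0) = K" and e2: "nat (q + int K) = K - K0" using that False by (auto simp: K0_def)
    have "z (K0 + (K - K0)) (0 + (K - K0)) = z K0 0" by (rule zsh)
    then have "z K (nat (q + int K)) = z K0 0" unfolding e1 e2 by simp
    then show ?thesis using False by (simp add: B_def K0_def)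
  qed
  have "B \<in> Xtilde u"
    unfolding Xtilde_def
  proof (intro CollectI allI)
    fix p :: int
    define K where "K = nat (- p)"
    define s where "s = nat (p + int K)"
    have "(\<lambda>i. B (p + int i)) = (\<lambda>i. z K (s + i))"
    proof
      fix i
      have "p + int i + int K \<ge> 0" by (simp add: K_def)
      then have "B (p + int i) = z K (nat (p + int i + int K))" by (rule Bz)
      moreover have "nat (p + int i + int K) = s + i" by (simp add: s_def K_def nat_add_distrib)
      ultimately show "B (p + int i) = z K (s + i)" by simp
    qed
    then show "(\<lambda>i. B (p + int i)) \<in> Xplus u" using Xplus_shift zprop by metis
  qed
  moreover have "B (int i) = c i" for i by (simp add: B_def)
  ultimately show ?thesis by blast
qed

lemma fol_iff: "c \<in> fol u a \<longleftrightarrow> (\<exists>B\<in>Xtilde u. (\<forall>j<length a. B (int j - int (length a - 1)) = a ! j)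
      \<and> (\<forall>i. c i = B (int i)))"
proof
  assume "\<exists>B\<in>Xtilde u. (\<forall>j<length a. B (int j - int (length a - 1)) = a ! j) \<and> (\<forall>i. c i = B (int i))"
  then obtain B where B: "B \<in> Xtilde u" "\<forall>j<length a. B (int j - int (length a - 1)) = a ! j"
    "\<forall>i. c i = B (int i)" by blast
  have "c = (\<lambda>i. B (0 + int i))" using B(3) by auto
  then have "c \<in> Xplus u" using Xtilde_tail[OF B(1), of 0] by simp
  then show "c \<in> fol u a" using B unfolding fol_def by blast
qed (auto simp: fol_def)



lemma fol_sub:
  assumes "length a \<ge> 2" shows "fol u a \<subseteq> fol u (tl a)"
proof
  fix c assume "c \<in> fol u a"
  then obtain B where B: "B \<in> Xtilde u" "\<forall>j<length a. B (int j - int (length a - 1)) = a ! j"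
    "\<forall>i. c i = B (int i)" unfolding fol_iff by blast
  have "\<forall>j<length (tl a). B (int j - int (length (tl a) - 1)) = tl a ! j"
  proof (intro allI impI)
    fix j assume j: "j < length (tl a)"
    have "int (Suc j) - int (length a - 1) = int j - int (length (tl a) - 1)"
      using assms by (simp add: of_nat_diff)
    moreover have "Suc j < length a" using j by simp
    then have "B (int (Suc j) - int (length a - 1)) = a ! Suc j" using B(2) by blast
    moreover have "a ! Suc j = tl a ! j" using j by (simp add: nth_tl)
    ultimately show "B (int j - int (length (tl a) - 1)) = tl a ! j" by metis
  qed
  then show "c \<in> fol u (tl a)" unfolding fol_iff using B by blast
qed

lemma shrink_sig:
  assumes len: "length a \<ge> 2" and al: "a \<in> lang u" and sg: "significant u (a @ [b])"
  shows "significant u a"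
proof -
  define n where "n = length a"
  have ne: "a \<noteq> []" using len by auto
  have tl_eq: "tl (a @ [b]) = tl a @ [b]" using ne by simp
  have "fol u (a @ [b]) \<subset> fol u (tl a @ [b])" using sg len unfolding significant_def tl_eq by auto
  then obtain c where c1: "c \<in> fol u (tl a @ [b])" and c2: "c \<notin> fol u (a @ [b])" by blast
  from c1 obtain B where B: "B \<in> Xtilde u" "\<forall>j<n. B (int j - int (n - 1)) = (tl a @ [b]) ! j"
    "\<forall>i. c i = B (int i)" unfolding fol_iff n_def using ne by auto
  define B' where "B' = (\<lambda>q. B (q + - 1))"
  have B'X: "B' \<in> Xtilde u" unfolding B'_def by (rule Xtilde_shift[OF B(1)])
  define c' where "c' = (\<lambda>i. B' (int i))"
  have "c' \<in> fol u (tl a)"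
    unfolding fol_iff
  proof (intro bexI conjI allI impI)
    fix j assume j: "j < length (tl a)"
    then have "j < n" "j < n - 1" by (auto simp: n_def)
    have "B' (int j - int (length (tl a) - 1)) = B (int j - int (n - 1))"
      unfolding B'_def by (rule arg_cong[where f=B]) (use len in \<open>simp add: n_def of_nat_diff\<close>)
    also have "\<dots> = (tl a @ [b]) ! j" using B(2) \<open>j < n\<close> by simp
    also have "\<dots> = tl a ! j" using j by (simp add: nth_append)
    finally show "B' (int j - int (length (tl a) - 1)) = tl a ! j" .
  qed (auto simp: c'_def B'X)
  moreover have "c' \<notin> fol u a"
  proof
    assume "c' \<in> fol u a"
    then obtain B'' where B'': "B'' \<in> Xtilde u" "\<forall>j<n. B'' (int j - int (n - 1)) = a ! j"
      "\<forall>i. c' i = B'' (int i)" unfolding fol_iff n_def by blast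
    define B3 where "B3 = (\<lambda>q. B'' (q + 1))"
    have B3X: "B3 \<in> Xtilde u" unfolding B3_def by (rule Xtilde_shift[OF B''(1)])
    have "c \<in> fol u (a @ [b])"
      unfolding fol_iff
    proof (intro bexI conjI allI impI)
      fix j assume j: "j < length (a @ [b])"
      show "B3 (int j - int (length (a @ [b]) - 1)) = (a @ [b]) ! j"
      proof (cases "j < n")
        case True
        have "B3 (int j - int (length (a @ [b]) - 1)) = B'' (int j - int (n - 1))"
          unfolding B3_def by (rule arg_cong[where f=B'']) (use len in \<open>simp add: n_def of_nat_diff\<close>)
        also have "\<dots> = a ! j" using B''(2) True by simp
        finally show ?thesis using True by (simp add: nth_append n_def)
      next
        case False
        then have jn: "j = n" using j by (simp add: n_def)
        have "B3 (int j - int (length (a @ [b]) - 1)) = B'' 1" unfolding B3_def jn by (simp add: n_def)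
        also have "\<dots> = c' 1" using B''(3) by simp
        also have "\<dots> = B 0" by (simp add: c'_def B'_def)
        also have "\<dots> = B (int (n - 1) - int (n - 1))" by simp
        also have "\<dots> = (tl a @ [b]) ! (n - 1)"
        proof -
          have "n - 1 < n" using len by (simp add: n_def)
          then show ?thesis using B(2) by blast
        qed
        also have "\<dots> = b" using len by (simp add: nth_append n_def)
        finally show ?thesis using jn by (simp add: n_def)
      qed
    next
      fix i
      have "B3 (int i) = B'' (int (Suc i))" by (simp add: B3_def add.commute)
      also have "\<dots> = c' (Suc i)" using B''(3) by simp
      also have "\<dots> = B (int i)" by (simp add: c'_def B'_def)
      also have "\<dots> = c i" using B(3) by simp
      finally show "c i = B3 (int i)" by simp
    qed (rule B3X)
    then show False using c2 by simp
  qed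
  ultimately have "fol u a \<noteq> fol u (tl a)" by blast
  then have "fol u a \<subset> fol u (tl a)" using fol_sub[OF len] by blast
  then show ?thesis using al len unfolding significant_def by simp
qed

lemma nonls_fol:
  assumes ne: "v \<noteq> []" and nl: "(\<not> e) # v \<notin> lang u"
  shows "fol u v \<subseteq> fol u (e # v)"
proof
  fix c assume "c \<in> fol u v"
  then obtain B where B: "B \<in> Xtilde u" "\<forall>j<length v. B (int j - int (length v - 1)) = v ! j"
    "\<forall>i. c i = B (int i)" unfolding fol_iff by blast
  define n where "n = length v"
  have n1: "n \<ge> 1" using ne by (simp add: n_def Suc_le_eq)
  define d where "d = B (- int n)"
  have "map (\<lambda>i. B (- int n + int i)) [0..<Suc n] = d # v"
  proof (rule nth_equalityI)
    fix i assume "i < length (map (\<lambda>i. B (- int n + int i)) [0..<Suc n])"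
    then have i: "i < Suc n" by simp
    show "map (\<lambda>i. B (- int n + int i)) [0..<Suc n] ! i = (d # v) ! i"
    proof (cases i)
      case 0 then show ?thesis by (simp add: d_def del: upt_Suc)
    next
      case (Suc j)
      then have "j < n" using i by simp
      have arg: "- int n + int i = int j - int (n - 1)" using Suc n1 by (simp add: of_nat_diff)
      have m: "map (\<lambda>i. B (- int n + int i)) [0..<Suc n] ! i = B (- int n + int i)"
        using i by (simp del: upt_Suc)
      have h: "B (int j - int (n - 1)) = v ! j" using B(2) \<open>j < n\<close> n_def by blast
      have "(d # v) ! i = v ! j" using Suc by simp
      then show ?thesis using m arg h by metis
    qed
  qed (simp add: n_def)
  then have "d # v \<in> lang u" using Xtilde_win[OF B(1), of "- int n" "Suc n"] by simp
  then have de: "d = e" using nl by (cases d; cases e) auto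
  show "c \<in> fol u (e # v)"
    unfolding fol_iff
  proof (intro bexI conjI allI impI)
    fix j assume j: "j < length (e # v)"
    show "B (int j - int (length (e # v) - 1)) = (e # v) ! j"
    proof (cases j)
      case 0 then show ?thesis using de by (simp add: d_def n_def)
    next
      case (Suc j')
      then have "j' < n" using j by (simp add: n_def)
      have "int j - int (length (e # v) - 1) = int j' - int (n - 1)" using Suc n1
        by (simp add: n_def of_nat_diff)
      moreover have "B (int j' - int (n - 1)) = v ! j'" using B(2) \<open>j' < n\<close> n_def by blast
      moreover have "(e # v) ! j = v ! j'" using Suc by simp
      ultimately show ?thesis by metis
    qed
  qed (use B in auto)
qed

lemma nonls_not_sig:
  assumes "v \<noteq> []" "(\<not> e) # v \<notin> lang u"
  shows "\<not> significant u (e # v)"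
  using nonls_fol[OF assms] assms(1) unfolding significant_def by auto

lemma sig_by_witness:
  assumes st: "sturmian u" and ne: "v \<noteq> []" and w: "(\<not> e) # v @ s \<in> lang u"
    and nw: "e # v @ s \<notin> lang u" and ev: "e # v \<in> lang u"
  shows "significant u (e # v)"
proof -
  define W where "W = (\<not> e) # v @ s"
  define n where "n = length v"
  have n1: "n \<ge> 1" using ne by (simp add: n_def Suc_le_eq)
  obtain k where k: "factor u k (length W) = W" using w by (auto simp: in_lang W_def)
  obtain B0 where B0: "B0 \<in> Xtilde u" "\<forall>i. B0 (int i) = u (k + i)"
    using Xtilde_ext[OF st orbit_Xplus[of u k]] by blast
  have Wn: "i < length W \<Longrightarrow> W ! i = u (k + i)" for i using k by (metis factor_nth)
  define B where "B = (\<lambda>q. B0 (q + int n))"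
  have BX: "B \<in> Xtilde u" unfolding B_def by (rule Xtilde_shift[OF B0(1)])
  define c where "c = (\<lambda>i. B (int i))"
  have "c \<in> fol u v"
    unfolding fol_iff
  proof (intro bexI conjI allI impI)
    fix j assume j: "j < length v"
    have "B (int j - int (length v - 1)) = B0 (int (Suc j))"
      unfolding B_def by (rule arg_cong[where f=B0]) (use n1 in \<open>simp add: n_def of_nat_diff\<close>)
    also have "\<dots> = u (k + Suc j)" using B0(2) by blast
    also have "\<dots> = W ! Suc j" using Wn[of "Suc j"] j by (simp add: W_def)
    also have "\<dots> = v ! j" using j by (simp add: W_def nth_append)
    finally show "B (int j - int (length v - 1)) = v ! j" .
  qed (auto simp: c_def BX)
  moreover have "c \<notin> fol u (e # v)"
  proof
    assume "c \<in> fol u (e # v)"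
    then obtain B' where B': "B' \<in> Xtilde u" "\<forall>j<Suc n. B' (int j - int n) = (e # v) ! j"
      "\<forall>i. c i = B' (int i)" unfolding fol_iff by (auto simp: n_def)
    have "map (\<lambda>i. B' (- int n + int i)) [0..<length W] = e # v @ s"
    proof (rule nth_equalityI)
      fix i assume "i < length (map (\<lambda>i. B' (- int n + int i)) [0..<length W])"
      then have i: "i < length W" by simp
      show "map (\<lambda>i. B' (- int n + int i)) [0..<length W] ! i = (e # v @ s) ! i"
      proof (cases "i < Suc n")
        case True
        have "B' (- int n + int i) = (e # v) ! i" using B'(2) True by (simp add: algebra_simps)
        then show ?thesis using True i by (simp add: nth_append n_def nth_Cons split: nat.split)
      next
        case False
        then obtain t where t: "i = Suc n + t" by (metis add_diff_inverse_nat)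
        have "B' (- int n + int i) = B' (int (Suc t))" using t by simp
        also have "\<dots> = c (Suc t)" using B'(3) by simp
        also have "\<dots> = B0 (int (Suc t + n))" by (simp add: c_def B_def ac_simps)
        also have "\<dots> = u (k + (Suc t + n))" using B0(2) by blast
        also have "\<dots> = W ! (Suc t + n)" using Wn[of "Suc t + n"] i t by (simp add: add.commute)
        also have "\<dots> = (e # v @ s) ! i" using t by (simp add: W_def nth_append n_def)
        finally show ?thesis using i by simp
      qed
    qed (simp add: W_def)
    then have "e # v @ s \<in> lang u" using Xtilde_win[OF B'(1), of "- int n" "length W"] by simp
    then show False using nw by simp
  qed
  ultimately have "fol u (e # v) \<noteq> fol u v" by blast
  moreover have "fol u (e # v) \<subseteq> fol u v" using fol_sub[of "e # v" u] ne by (simp add: Suc_le_eq)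
  ultimately show ?thesis using ev n1 unfolding significant_def by (auto simp: n_def)
qed

lemma suffix_same_len: "suffix s a \<Longrightarrow> suffix t a \<Longrightarrow> length s = length t \<Longrightarrow> s = t"
  unfolding suffix_def by (metis append_eq_append_conv)

lemma sig_eq:
  assumes "suffix s a" "significant u s" "\<forall>t. suffix t a \<and> significant u t \<longrightarrow> length t \<le> length s"
  shows "sig u a = s"
  unfolding sig_def
proof (rule the_equality)
  show "suffix s a \<and> significant u s \<and> (\<forall>t. suffix t a \<and> significant u t \<longrightarrow> length t \<le> length s)"
    using assms by blast
  fix s' assume "suffix s' a \<and> significant u s' \<and> (\<forall>t. suffix t a \<and> significant u t \<longrightarrow> length t \<le> length s')"
  then show "s' = s" using assms suffix_same_len by (metis le_antisym)
qed

lemma sig_spec: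
  assumes ne: "a \<noteq> []" and la: "[last a] \<in> lang u"
  shows "suffix (sig u a) a \<and> significant u (sig u a) \<and>
    (\<forall>t. suffix t a \<and> significant u t \<longrightarrow> length t \<le> length (sig u a))"
proof -
  define S where "S = {t. suffix t a \<and> significant u t}"
  have "S \<subseteq> set (suffixes a)" by (auto simp: S_def)
  then have fin: "finite S" using finite_subset by blast
  have "suffix [last a] a" using ne by (metis append_butlast_last_id suffix_def)
  then have "[last a] \<in> S" using la by (simp add: S_def significant_def)
  then have "length ` S \<noteq> {}" by blast
  then have "Max (length ` S) \<in> length ` S" using fin by simp
  then obtain t0 where t0: "t0 \<in> S" "length t0 = Max (length ` S)" by force
  have "\<forall>t. suffix t a \<and> significant u t \<longrightarrow> length t \<le> length t0"
    using fin t0(2) by (auto simp: S_def)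
  then have "sig u a = t0" using t0(1) sig_eq by (auto simp: S_def)
  then show ?thesis using t0 \<open>\<forall>t. _\<close> by (auto simp: S_def)
qed



lemma Lblock_Suc: "Lblock l (Suc k) = Lblock l k @ [l (Suc k)]"
  by (simp add: Lblock_def)

lemma Lblock_len[simp]: "length (Lblock l k) = k"
  by (simp add: Lblock_def)

lemma rs_of_two: "V @ [a] \<in> lang u \<Longrightarrow> V @ [b] \<in> lang u \<Longrightarrow> a \<noteq> b \<Longrightarrow> right_special u V"
  unfolding right_special_def by (cases a; cases b) auto

lemma ls_of_two: "a # V \<in> lang u \<Longrightarrow> b # V \<in> lang u \<Longrightarrow> a \<noteq> b \<Longrightarrow> left_special u V"
  unfolding left_special_def by (cases a; cases b) auto

lemma cons_eq_snoc: "r # w = w @ [x] \<Longrightarrow> r = x"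
  by (induction w arbitrary: r) auto

definition cnt :: "bool \<Rightarrow> bool list \<Rightarrow> nat" where
  "cnt x xs = length (filter (\<lambda>c. c = x) xs)"

lemma cnt_append[simp]: "cnt x (xs @ ys) = cnt x xs + cnt x ys"
  by (simp add: cnt_def)

lemma cnt_Cons[simp]: "cnt x (a # xs) = (if a = x then Suc (cnt x xs) else cnt x xs)"
  by (simp add: cnt_def)

lemma cnt_Nil[simp]: "cnt x [] = 0"
  by (simp add: cnt_def)

lemma cnt_take_drop: "cnt x (take n xs) + cnt x (drop n xs) = cnt x xs"
  by (metis append_take_drop_id cnt_append)

lemma count_window:
  assumes "1 \<le> s" "s \<le> length Y"
  shows "cnt x (take (length Y - 1) (drop s (Y @ butlast Y))) \<le> cnt x Y"
proof -
  have "drop s (Y @ butlast Y) = drop s Y @ butlast Y" using assms by simp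
  moreover have "take (length Y - 1) (drop s Y @ butlast Y) = drop s Y @ take (s - 1) (butlast Y)"
    using assms by (simp add: take_append)
  moreover have "take (s - 1) (butlast Y) = take (s - 1) Y" using assms by (simp add: take_butlast)
  ultimately have eq: "take (length Y - 1) (drop s (Y @ butlast Y)) = drop s Y @ take (s - 1) Y" by simp
  have "drop (s - 1) Y = Y ! (s - 1) # drop s Y" using assms
    by (metis Cons_nth_drop_Suc Suc_diff_1 Suc_le_eq diff_less less_le_trans zero_less_one)
  then have "cnt x (drop s Y) \<le> cnt x (drop (s - 1) Y)" by simp
  then show ?thesis using eq cnt_take_drop[of x "s - 1" Y] by simp
qed

lemma factor_window:
  assumes "s + m \<le> N"
  shows "factor u (i + s) m = take m (drop s (factor u i N))"
  by (rule nth_equalityI) (use assms in \<open>auto simp: add.assoc\<close>)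

lemma rs_head:
  assumes st: "sturmian u" and ls: "left_special_seq u l" and rs: "right_special u (e # Lblock l k)"
  shows "e = l (Suc k)"
proof (rule ccontr)
  assume ne: "e \<noteq> l (Suc k)"
  define w where "w = Lblock l k"
  define r where "r = e"
  define x where "x = l (Suc k)"
  define R where "R = r # w"
  define L where "L = w @ [x]"
  have rx: "r \<noteq> x" using ne by (simp add: r_def x_def)
  have lenw: "length w = k" by (simp add: w_def)
  have RS: "right_special u R" using rs by (simp add: R_def r_def w_def)
  have LS: "left_special u L" using ls unfolding left_special_seq_def left_special_def
    by (simp add: L_def w_def x_def Lblock_Suc[symmetric])
  have RneL: "R \<noteq> L"
  proof
    assume "R = L"
    then have "r # w = w @ [x]" unfolding R_def L_def .
    then have "r = x" by (rule cons_eq_snoc)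
    then show False using rx by simp
  qed
  define W where "W = (\<lambda>t. factor u t (Suc k))"
  have Wlang: "W t \<in> langn u (Suc k)" for t by (simp add: W_def langn_def)
  have ext: "factor u t (Suc (Suc k)) = W t @ [u (t + Suc k)]" for t
    by (simp add: W_def factor_Suc)
  have ext': "factor u t (Suc (Suc k)) = u t # W (Suc t)" for t
    by (simp add: W_def factor_Suc')
  have succ: "W (Suc t) = W (Suc t')" if "W t = W t'" "W t \<noteq> R" for t t'
  proof -
    have "u (t + Suc k) = u (t' + Suc k)"
    proof (rule ccontr)
      assume "u (t + Suc k) \<noteq> u (t' + Suc k)"
      moreover have "W t @ [u (t + Suc k)] \<in> lang u" "W t @ [u (t' + Suc k)] \<in> lang u"
        using ext[of t] ext[of t'] that(1) by (metis factor_in_lang)+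
      ultimately have "right_special u (W t)" by (rule rs_of_two[rotated 2]) 
      then have "W t = R" using rs_unique[OF st _ RS] lenw by (simp add: W_def R_def)
      then show False using that(2) by simp
    qed
    have h: "W (Suc s) = tl (W s @ [u (s + Suc k)])" for s
    proof -
      have "W (Suc s) = tl (factor u s (Suc (Suc k)))" unfolding ext' by simp
      also have "\<dots> = tl (W s @ [u (s + Suc k)])" unfolding ext by simp
      finally show ?thesis .
    qed
    show ?thesis using h[of t] h[of t'] that(1) \<open>u (t + Suc k) = u (t' + Suc k)\<close> by simp
  qed
  have pred: "W t = W t'" if "W (Suc t) = W (Suc t')" "W (Suc t) \<noteq> L" for t t'
  proof -
    have "u t = u t'"
    proof (rule ccontr)
      assume "u t \<noteq> u t'"
      moreover have "u t # W (Suc t) \<in> lang u" "u t' # W (Suc t) \<in> lang u"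
        using ext'[of t] ext'[of t'] that(1) by (metis factor_in_lang)+
      ultimately have "left_special u (W (Suc t))" by (rule ls_of_two[rotated 2])
      then have "W (Suc t) = L" using ls_unique[OF st _ LS] lenw by (simp add: W_def L_def)
      then show False using that(2) by simp
    qed
    have h: "W s = butlast (u s # W (Suc s))" for s
    proof -
      have "W s = butlast (factor u s (Suc (Suc k)))" unfolding ext by simp
      also have "\<dots> = butlast (u s # W (Suc s))" unfolding ext' by simp
      finally show ?thesis .
    qed
    show ?thesis using h[of t] h[of t'] that(1) \<open>u t = u t'\<close> by simp
  qed
  have predL: "W t = x # w" if "W (Suc t) = L" "W t \<noteq> R" for t
  proof -
    have "factor u t (Suc (Suc k)) = u t # L" using ext' that(1) by simp
    then have "W t = u t # w" using ext[of t] by (simp add: L_def)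
    then show ?thesis using that(2) rx by (cases "u t"; cases r; cases x) (auto simp: R_def)
  qed
  obtain i where i: "factor u i (length (R @ [r])) = R @ [r]"
    using RS by (cases r) (auto simp: right_special_def in_lang)
  have Wi: "W i = R" and Wi1: "W (Suc i) = w @ [r]" and Zi: "factor u i (Suc (Suc k)) = r # w @ [r]"
    using i ext[of i] ext'[of i] lenw by (auto simp: R_def)
  have Rl: "R \<in> lang u" using RS lang_prefix unfolding right_special_def by blast
  have lenR: "length R = Suc k" using lenw by (simp add: R_def)
  have "\<exists>j\<ge>Suc i. W j = R"
    using occurs_late[OF st Rl, of "Suc i"] lenR by (simp add: W_def)
  define j where "j = (LEAST j. i < j \<and> W j = R)"
  have j: "i < j" "W j = R" unfolding j_def
    using LeastI_ex[of "\<lambda>j. i < j \<and> W j = R"] \<open>\<exists>j\<ge>Suc i. W j = R\<close> by (auto simp: Suc_le_eq)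
  have jmin: "W t \<noteq> R" if "i < t" "t < j" for t
    using not_less_Least[of t "\<lambda>j. i < j \<and> W j = R"] that by (auto simp: j_def)
  have dist: "W a \<noteq> W b" if "i < a" "a < b" "b \<le> j" for a b
  proof
    assume ab: "W a = W b"
    have "s \<le> j - b \<Longrightarrow> W (a + s) = W (b + s)" for s
    proof (induction s)
      case 0 then show ?case using ab by simp
    next
      case (Suc s)
      then have "W (a + s) = W (b + s)" by simp
      moreover have "W (a + s) \<noteq> R" using jmin[of "a + s"] Suc.prems that by simp
      ultimately show ?case using succ[of "a + s" "b + s"] by simp
    qed
    then have h: "W (a + (j - b)) = W (b + (j - b))" using le_refl by blast
    have "b + (j - b) = j" using that by simp
    then have "W (a + (j - b)) = R" using h j(2) by metis
    moreover have "i < a + (j - b)" "a + (j - b) < j" using that by auto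
    ultimately show False using jmin by blast
  qed
  have cover: "\<exists>t. i < t \<and> t \<le> j \<and> W t = V" if V: "V \<in> langn u (Suc k)" for V
  proof -
    obtain a' where a': "W a' = V" using V by (auto simp: langn_def in_lang W_def)
    have "\<exists>b\<ge>a'. W b = R"
      using occurs_late[OF st Rl, of a'] lenR by (simp add: W_def)
    define b' where "b' = (LEAST b. a' \<le> b \<and> W b = R)"
    have b': "a' \<le> b'" "W b' = R" unfolding b'_def
      using LeastI_ex[of "\<lambda>b. a' \<le> b \<and> W b = R"] \<open>\<exists>b\<ge>a'. W b = R\<close> by auto
    have bmin: "W t \<noteq> R" if "a' \<le> t" "t < b'" for t
      using not_less_Least[of t "\<lambda>b. a' \<le> b \<and> W b = R"] that by (auto simp: b'_def)
    have P: "s \<le> b' - a' \<Longrightarrow> s \<le> j - i - 1 \<Longrightarrow> W (b' - s) = W (j - s)" for s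
    proof (induction s)
      case 0 then show ?case using b' j by simp
    next
      case (Suc s)
      then have IH: "W (b' - s) = W (j - s)" by simp
      define t1 where "t1 = b' - Suc s"
      define t2 where "t2 = j - Suc s"
      have s1: "Suc t1 = b' - s" "Suc t2 = j - s" using Suc.prems by (auto simp: t1_def t2_def)
      have r1: "W t1 \<noteq> R" using bmin[of t1] Suc.prems b' by (auto simp: t1_def)
      have r2: "W t2 \<noteq> R" using jmin[of t2] Suc.prems j by (auto simp: t2_def)
      show ?case
      proof (cases "W (j - s) = L")
        case True
        then have "W (Suc t1) = L" "W (Suc t2) = L" using IH s1 by simp_all
        then have "W t1 = x # w" "W t2 = x # w" using predL[of t1] predL[of t2] r1 r2 by blast+
        then show ?thesis by (simp add: t1_def t2_def)
      next
        case False
        then show ?thesis using pred[of t1 t2] IH s1 by (simp add: t1_def t2_def)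
      qed
    qed
    show ?thesis
    proof (cases "b' - a' \<le> j - i - 1")
      case True
      then have "W a' = W (j - (b' - a'))" using P[of "b' - a'"] b' by simp
      then show ?thesis using a' True j by (intro exI[of _ "j - (b' - a')"]) auto
    next
      case False
      have h0: "W (b' - (j - i - 1)) = W (j - (j - i - 1))" by (rule P) (use False in auto)
      have e1: "j - (j - i - 1) = Suc i" using j by simp
      have e2: "b' - (j - i - 1) = Suc (b' - (j - i))" using False j by simp
      have h: "W (Suc (b' - (j - i))) = W (Suc i)" using h0 unfolding e1 e2 .
      have "W (Suc i) \<noteq> L" using Wi1 rx by (simp add: L_def)
      then have "W (b' - (j - i)) = W i" using pred[OF h] h by simp
      then have "W (b' - (j - i)) = R" using Wi by simp
      moreover have "a' \<le> b' - (j - i)" "b' - (j - i) < b'" using False j by auto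
      ultimately show ?thesis using bmin by blast
    qed
  qed
  have img: "W ` {Suc i..j} = langn u (Suc k)"
  proof
    show "W ` {Suc i..j} \<subseteq> langn u (Suc k)" using Wlang by auto
    show "langn u (Suc k) \<subseteq> W ` {Suc i..j}"
      using cover by (force simp: Suc_le_eq)
  qed
  have injW: "inj_on W {Suc i..j}"
  proof (rule inj_onI)
    fix a b assume "a \<in> {Suc i..j}" "b \<in> {Suc i..j}" "W a = W b"
    then show "a = b" using dist[of a b] dist[of b a] by (metis atLeastAtMost_iff Suc_le_eq linorder_neqE_nat)
  qed
  have "card (W ` {Suc i..j}) = j - i" using card_image[OF injW] by simp
  then have jk: "j = i + Suc (Suc k)" using img sturmian_card[OF st, of "Suc k"] j(1) by simp
  have "L \<in> langn u (Suc k)" using LS lenw by (auto simp: left_special_def langn_def L_def dest: lang_Cons)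
  then obtain t where t: "i < t" "t \<le> j" "W t = L" using cover by blast
  define Y where "Y = r # w @ [r]"
  have Z: "factor u i (length Y + (length Y - 1)) = Y @ butlast Y"
  proof -
    have "factor u i (length Y + (length Y - 1)) = factor u i (Suc (Suc k)) @ factor u j (Suc k)"
      using factor_add[of u i "Suc (Suc k)" "Suc k"] jk lenw by (simp add: Y_def)
    also have "\<dots> = Y @ butlast Y" using Zi j(2) by (simp add: Y_def W_def R_def)
    finally show ?thesis .
  qed
  have "W t = take (length Y - 1) (drop (t - i) (Y @ butlast Y))"
    using factor_window[of "t - i" "Suc k" "length Y + (length Y - 1)" u i] Z t jk lenw
    by (simp add: W_def Y_def)
  then have "cnt x L \<le> cnt x Y" using count_window[of "t - i" Y x] t jk lenw by (simp add: Y_def)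
  then show False using rx by (simp add: L_def Y_def)
qed



lemma rs_suffix: "right_special u (p @ v) \<Longrightarrow> right_special u v"
  unfolding right_special_def using lang_suffix[of p] by (metis append.assoc)

lemma Lblock_take: "k \<le> k' \<Longrightarrow> Lblock l k = take k (Lblock l k')"
  by (simp add: Lblock_def take_map del: upt_Suc)

lemma suffix_len_le: "suffix t z \<Longrightarrow> length t \<le> length z"
  unfolding suffix_def by auto

lemma suffix_shorter: "suffix t z \<Longrightarrow> suffix q z \<Longrightarrow> length t \<le> length q \<Longrightarrow> suffix t q"
  using suffix_same_cases[of t z q] suffix_len_le suffix_same_len by (metis le_antisym)

lemma lang_letter: assumes "left_special_seq u l" shows "[c] \<in> lang u"
proof -
  have "False # Lblock l 0 \<in> lang u \<and> True # Lblock l 0 \<in> lang u"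
    using assms unfolding left_special_seq_def by blast
  moreover have "Lblock l 0 = []" by (simp add: Lblock_def)
  ultimately show ?thesis by (cases c) auto
qed

theorem lemma4p12:
  fixes u l :: "nat \<Rightarrow> bool" and x w y :: bool and m n :: nat
  assumes "sturmian u"
    and "left_special_seq u l"
    and "1 \<le> m" and "m < n"
    and "consecutive_rs u (x # Lblock l (n - 1)) (w # Lblock l (m - 1))"
    and "y \<noteq> l n"
  shows "(x \<noteq> w \<longrightarrow> hb_arrow u (x # Lblock l (n - 1)) (w # Lblock l m))
       \<and> (x = w \<longrightarrow> hb_arrow u (x # Lblock l (n - 1)) (sig u (w # Lblock l (m - 1) @ [y])))"
proof -
  note st = assms(1) and ls = assms(2) and m1 = assms(3) and mn = assms(4) and yn = assms(6)
  define \<alpha> where "\<alpha> = x # Lblock l (n - 1)"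
  define \<beta> where "\<beta> = w # Lblock l (m - 1)"
  have la: "length \<alpha> = n" "length \<beta> = m" using m1 mn by (auto simp: \<alpha>_def \<beta>_def)
  have RSa: "right_special u \<alpha>" and SGa: "significant u \<alpha>"
    and RSb: "right_special u \<beta>" and SGb: "significant u \<beta>"
    and nomid: "\<And>v. right_special u v \<Longrightarrow> significant u v \<Longrightarrow> m < length v \<Longrightarrow> length v < n \<Longrightarrow> False"
    using assms(5) la mn unfolding consecutive_rs_def \<alpha>_def[symmetric] \<beta>_def[symmetric] by auto
  have xl: "x = l n" using rs_head[OF st ls, of x "n - 1"] RSa mn by (simp add: \<alpha>_def)
  have wl: "w = l m" using rs_head[OF st ls, of w "m - 1"] RSb m1 by (simp add: \<beta>_def)
  have suf: "suffix \<beta> \<alpha>"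
  proof -
    have "\<alpha> = take (n - m) \<alpha> @ drop (n - m) \<alpha>" by simp
    then have "right_special u (drop (n - m) \<alpha>)" using RSa rs_suffix by metis
    then have "drop (n - m) \<alpha> = \<beta>" using rs_unique[OF st _ RSb] la mn by simp
    then show ?thesis unfolding suffix_def by (metis append_take_drop_id)
  qed
  have Lm: "Lblock l m = Lblock l (m - 1) @ [l m]" using m1 Lblock_Suc[of l "m - 1"] by simp
  have Ln: "Lblock l n = Lblock l (n - 1) @ [l n]" using mn Lblock_Suc[of l "n - 1"] by simp
  have alang: "\<alpha> @ [b] \<in> lang u" for b using RSa by (cases b) (auto simp: right_special_def)
  have short: "length t \<le> Suc m" if b: "b \<noteq> l n" and t: "suffix t (\<alpha> @ [b])" "significant u t" for b t
  proof (rule ccontr)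
    assume long: "\<not> length t \<le> Suc m"
    then have "t \<noteq> []" by auto
    then obtain t' where t': "t = t' @ [b]" "suffix t' \<alpha>" using t(1) by auto
    have "length t \<le> Suc n" using suffix_len_le[OF t(1)] la by simp
    show False
    proof (cases "length t = Suc n")
      case True
      then have "t' = \<alpha>" using t' la suffix_same_len[of t' \<alpha> \<alpha>] by simp
      then have tt: "t = x # (Lblock l (n - 1) @ [b])" using t' by (simp add: \<alpha>_def)
      have "(\<not> x) # (Lblock l (n - 1) @ [b]) \<notin> lang u"
      proof
        assume h: "(\<not> x) # (Lblock l (n - 1) @ [b]) \<in> lang u"
        have "x # (Lblock l (n - 1) @ [b]) \<in> lang u" using alang[of b] by (simp add: \<alpha>_def)
        then have "left_special u (Lblock l (n - 1) @ [b])" using h by (rule ls_of_two) simp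
        moreover have "left_special u (Lblock l n)" using ls
          by (simp add: left_special_seq_def left_special_def)
        ultimately have "Lblock l (n - 1) @ [b] = Lblock l n" using ls_unique[OF st] mn by simp
        then show False using Ln b by simp
      qed
      then show False using nonls_not_sig[of "Lblock l (n - 1) @ [b]" x u] t(2) tt by simp
    next
      case False
      then have len': "Suc m \<le> length t'" "length t' < n" using long t' \<open>length t \<le> Suc n\<close> by auto
      have "t' \<in> lang u" using t'(2) alang[of b] unfolding suffix_def
        by (metis append.assoc lang_prefix lang_suffix)
      then have "significant u t'" using shrink_sig[of t' u b] t(2) t'(1) len' m1 by simp
      moreover have "right_special u t'" using t'(2) RSa rs_suffix unfolding suffix_def by metis
      moreover have "m < length t'" using len' by simp
      ultimately show False using nomid len'(2) by blast
    qed
  qed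
  have part1: "hb_arrow u \<alpha> (w # Lblock l m)" if xw: "x \<noteq> w"
  proof -
    define \<gamma> where "\<gamma> = w # Lblock l m"
    have b: "l m \<noteq> l n" using xw xl wl by simp
    have gsuf: "suffix \<gamma> (\<alpha> @ [l m])" using suf by (simp add: \<gamma>_def \<beta>_def Lm)
    have gl: "\<gamma> \<in> lang u" using gsuf alang[of "l m"] unfolding suffix_def by (metis lang_suffix)
    define s where "s = drop m (Lblock l (n - 1)) @ [\<not> l n]"
    have vs: "Lblock l m @ s = Lblock l (n - 1) @ [\<not> l n]"
      using Lblock_take[of m "n - 1" l] mn by (simp add: s_def)
    have nx: "(\<not> w) = x" using xw by (cases x; cases w) auto
    have sg: "significant u \<gamma>" unfolding \<gamma>_def
    proof (rule sig_by_witness[OF st])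
      show "Lblock l m \<noteq> []" using m1 by (simp add: Lblock_def)
      show "(\<not> w) # Lblock l m @ s \<in> lang u" using alang[of "\<not> l n"] by (simp add: vs nx \<alpha>_def)
      show "w # Lblock l m @ s \<notin> lang u"
      proof
        assume "w # Lblock l m @ s \<in> lang u"
        then have h1: "(w # Lblock l (n - 1)) @ [\<not> l n] \<in> lang u" by (simp add: vs)
        have "w # Lblock l n \<in> lang u" using ls unfolding left_special_seq_def by (cases w) auto
        then have h2: "(w # Lblock l (n - 1)) @ [l n] \<in> lang u" using Ln by simp
        have "right_special u (w # Lblock l (n - 1))" using rs_of_two[OF h1 h2] by simp
        then have "w # Lblock l (n - 1) = \<alpha>" using rs_unique[OF st _ RSa] la mn by simp
        then show False using xw by (simp add: \<alpha>_def)
      qed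
      show "w # Lblock l m \<in> lang u" using gl by (simp add: \<gamma>_def)
    qed
    have "sig u (\<alpha> @ [l m]) = \<gamma>"
    proof (rule sig_eq[OF gsuf sg], intro allI impI)
      fix t assume "suffix t (\<alpha> @ [l m]) \<and> significant u t"
      then show "length t \<le> length \<gamma>" using short[OF b] m1 by (auto simp: \<gamma>_def)
    qed
    then show ?thesis unfolding hb_arrow_def using SGa sg alang[of "l m"] by (auto simp: \<gamma>_def)
  qed
  have part2: "hb_arrow u \<alpha> (sig u (\<beta> @ [y]))"
  proof -
    define s where "s = sig u (\<beta> @ [y])"
    have spec: "suffix s (\<beta> @ [y])" "significant u s"
      "\<And>t. suffix t (\<beta> @ [y]) \<Longrightarrow> significant u t \<Longrightarrow> length t \<le> length s"
      using sig_spec[of "\<beta> @ [y]" u] lang_letter[OF ls, of y] by (auto simp: s_def)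
    have bsuf: "suffix (\<beta> @ [y]) (\<alpha> @ [y])" using suf by simp
    have "sig u (\<alpha> @ [y]) = s"
    proof (rule sig_eq)
      show "suffix s (\<alpha> @ [y])" using spec(1) bsuf suffix_order.trans by blast
      show "significant u s" by (rule spec(2))
      show "\<forall>t. suffix t (\<alpha> @ [y]) \<and> significant u t \<longrightarrow> length t \<le> length s"
      proof (intro allI impI)
        fix t assume h: "suffix t (\<alpha> @ [y]) \<and> significant u t"
        then have "length t \<le> Suc m" using short[OF yn] by blast
        then have "suffix t (\<beta> @ [y])" using suffix_shorter[of t "\<alpha> @ [y]" "\<beta> @ [y]"] h bsuf la by simp
        then show "length t \<le> length s" using spec(3) h by blast
      qed
    qed
    then show ?thesis unfolding hb_arrow_def using SGa spec(2) alang[of y] by (auto simp: s_def)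
  qed
  have p2: "hb_arrow u (x # Lblock l (n - 1)) (sig u (w # Lblock l (m - 1) @ [y]))"
    using part2 by (simp add: \<alpha>_def \<beta>_def)
  have p1: "x \<noteq> w \<longrightarrow> hb_arrow u (x # Lblock l (n - 1)) (w # Lblock l m)"
    using part1 unfolding \<alpha>_def by blast
  show ?thesis using p1 p2 by blast
qed


end
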